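(* For all $\Delta,\Delta',D,D'\in\mathcal D_n^+$, $$d_s(\Delta+D,\Delta'+D')\le\max\big(d_s(\Delta,\Delta'),d_s(D,D')\big).$$
   Context: $\mathcal D_n^+$ is the set of $n\times n$ diagonal matrices with positive diagonal entries, and $d_s(\Delta,\Delta')=\max_i\frac{|\Delta_i-\Delta'_i|}{\sqrt{\Delta_i\Delta'_i}}$. *)

theory Defs
  imports "HOL-Analysis.Analysis"
begin

text \<open>The set D_n^+ of n x n diagonal matrices with positive diagonal entries;
  the dimension n is the cardinality of the finite index type 'n.\<close>
definition pos_diag :: "(real^'n^'n) set" where
  "pos_diag = {A. (\<forall>i j. i \<noteq> j \<longrightarrow> A $ i $ j = 0) \<and> (\<forall>i. A $ i $ i > 0)}"

definition d_s :: "real^'n^'n \<Rightarrow> real^'n^'n \<Rightarrow> real" where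
  "d_s A B = Max (range (\<lambda>i. \<bar>A $ i $ i - B $ i $ i\<bar> / sqrt (A $ i $ i * B $ i $ i)))"

end

theory Submission
  imports Defs
begin

lemma cs_sqrt:
  fixes x1 y1 u1 v1 :: real
  assumes "x1 > 0" "y1 > 0" "u1 > 0" "v1 > 0"
  shows "sqrt (x1 * y1) + sqrt (u1 * v1) \<le> sqrt ((x1+u1) * (y1+v1))"
proof -
  define p q r s where "p = sqrt x1" "q = sqrt y1" "r = sqrt u1" "s = sqrt v1"
  have x1: "x1 = p^2" and y1: "y1 = q^2" and u1: "u1 = r^2" and v1: "v1 = s^2"
    using assms by (simp_all add: p_q_r_s_def)
  have nn: "p \<ge> 0" "q \<ge> 0" "r \<ge> 0" "s \<ge> 0" using assms by (simp_all add: p_q_r_s_def)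
  have e1: "sqrt (x1 * y1) = p * q" using nn by (simp add: x1 y1 real_sqrt_mult)
  have e2: "sqrt (u1 * v1) = r * s" using nn by (simp add: u1 v1 real_sqrt_mult)
  have "(p * q + r * s)^2 \<le> (x1+u1) * (y1+v1)"
  proof -
    have "0 \<le> (p * s - r * q)^2" by simp
    thus ?thesis by (simp add: x1 y1 u1 v1 power2_eq_square algebra_simps)
  qed
  hence "sqrt ((p * q + r * s)^2) \<le> sqrt ((x1+u1) * (y1+v1))" by (rule real_sqrt_le_mono)
  thus ?thesis using nn e1 e2 by simp
qed

lemma scalar:
  fixes a a' b b' t :: real
  assumes "a > 0" "a' > 0" "b > 0" "b' > 0"
    and "\<bar>a - a'\<bar> / sqrt (a * a') \<le> t" and "\<bar>b - b'\<bar> / sqrt (b * b') \<le> t"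
  shows "\<bar>(a+b) - (a'+b')\<bar> / sqrt ((a+b) * (a'+b')) \<le> t"
proof -
  have s1: "sqrt (a * a') > 0" "sqrt (b * b') > 0" "sqrt ((a+b) * (a'+b')) > 0" using assms by auto
  have h1: "\<bar>a - a'\<bar> \<le> t  *  sqrt (a * a')" using assms(5) s1 by (simp add: divide_le_eq)
  have h2: "\<bar>b - b'\<bar> \<le> t  *  sqrt (b * b')" using assms(6) s1 by (simp add: divide_le_eq)
  have t0: "t \<ge> 0" using h1 s1 by (smt (verit) mult_neg_pos)
  have "\<bar>(a+b) - (a'+b')\<bar> \<le> \<bar>a - a'\<bar> + \<bar>b - b'\<bar>" by simp
  also have "\<dots> \<le> t  *  (sqrt (a * a') + sqrt (b * b'))" using h1 h2 by (simp add: algebra_simps)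
  also have "\<dots> \<le> t  *  sqrt ((a+b) * (a'+b'))"
    using cs_sqrt[OF assms(1-4)] t0 by (simp add: mult_left_mono)
  finally show ?thesis using s1 by (simp add: divide_le_eq)
qed

theorem mainTheorem5:
  fixes \<Delta> \<Delta>' D D' :: "real^'n^'n"
  assumes "\<Delta> \<in> pos_diag" and "\<Delta>' \<in> pos_diag" and "D \<in> pos_diag" and "D' \<in> pos_diag"
  shows "d_s (\<Delta> + D) (\<Delta>' + D') \<le> max (d_s \<Delta> \<Delta>') (d_s D D')"
proof -
  let ?t = "max (d_s \<Delta> \<Delta>') (d_s D D')"
  have le: "\<bar>(\<Delta>+D) $ i $ i - (\<Delta>'+D') $ i $ i\<bar> / sqrt ((\<Delta>+D) $ i $ i  *  (\<Delta>'+D') $ i $ i) \<le> ?t" for i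
  proof -
    have p: "\<Delta> $ i $ i > 0" "\<Delta>' $ i $ i > 0" "D $ i $ i > 0" "D' $ i $ i > 0"
      using assms by (auto simp: pos_diag_def)
    have a: "\<bar>\<Delta> $ i $ i - \<Delta>' $ i $ i\<bar> / sqrt (\<Delta> $ i $ i  *  \<Delta>' $ i $ i) \<le> d_s \<Delta> \<Delta>'"
      unfolding d_s_def by (rule Max_ge) auto
    have b: "\<bar>D $ i $ i - D' $ i $ i\<bar> / sqrt (D $ i $ i  *  D' $ i $ i) \<le> d_s D D'"
      unfolding d_s_def by (rule Max_ge) auto
    show ?thesis using scalar[OF p, of ?t] a b by simp
  qed
  show ?thesis unfolding d_s_def[of "\<Delta>+D"]
    using le by (subst Max_le_iff) auto
qed

end
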